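(* Let $a<b$, $n\in\mathbb{N}$, $h=\frac{b-a}{n}$ and $x_k=a+k\frac{b-a}{n}$ for $k=0,\dots,n$. Let $f:[a,b]\to\mathbb{R}$ be convex. For $j=1,\dots,n$ and $t\in[0,1]$ define \[ H_j(t)=\frac1h\int_{x_{j-1}}^{x_j} f\left(tu+(1-t)\frac{x_{j-1}+x_j}{2}\right)du, \] \[ F_j(t)=\frac{1}{2h}\int_{x_{j-1}}^{x_j}\left[f\left(\frac{1+t}{2}x_{j-1}+\frac{1-t}{2}u\right)+f\left(\frac{1+t}{2}x_j+\frac{1-t}{2}u\right)\right]du, \] and $H(t)=\sum_{j=1}^n H_j(t)$, $F(t)=\sum_{j=1}^n F_j(t)$ for $t\in[0,1]$. Then: (1) $H$ and $F$ are convex on $[0,1]$; (2) $H$ and $F$ are monotonic nondecreasing on $[0,1]$; (3) $\sup_{t\in[0,1]}H(t)=\frac1h\int_a^b f(u)\,du=H(1)$ and $\inf_{t\in[0,1]}H(t)=\sum_{k=1}^n f\left(\frac{x_{k-1}+x_k}{2}\right)=H(0)$; and $\sup_{t\in[0,1]}F(t)=\frac12\left[f(a)+2\sum_{k=1}^{n-1}f(x_k)+f(b)\right]=F(1)$ and $\inf_{t\in[0,1]}F(t)=\frac1h\int_a^b f(u)\,du=F(0)$. *)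

theory Defs
  imports "HOL-Analysis.Analysis"
begin

definition grid_pt :: "real \<Rightarrow> real \<Rightarrow> nat \<Rightarrow> nat \<Rightarrow> real" where
  "grid_pt a b n k = a + real k * ((b - a) / real n)"

definition Hj :: "(real \<Rightarrow> real) \<Rightarrow> real \<Rightarrow> real \<Rightarrow> nat \<Rightarrow> nat \<Rightarrow> real \<Rightarrow> real" where
  "Hj f a b n j t =
     (let h = (b - a) / real n; x0 = grid_pt a b n (j - 1); x1 = grid_pt a b n j in
      (1 / h) * integral {x0..x1} (\<lambda>u. f (t * u + (1 - t) * ((x0 + x1) / 2))))"

definition Fj :: "(real \<Rightarrow> real) \<Rightarrow> real \<Rightarrow> real \<Rightarrow> nat \<Rightarrow> nat \<Rightarrow> real \<Rightarrow> real" where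
  "Fj f a b n j t =
     (let h = (b - a) / real n; x0 = grid_pt a b n (j - 1); x1 = grid_pt a b n j in
      (1 / (2 * h)) * integral {x0..x1}
        (\<lambda>u. f ((1 + t) / 2 * x0 + (1 - t) / 2 * u) + f ((1 + t) / 2 * x1 + (1 - t) / 2 * u)))"

definition HH :: "(real \<Rightarrow> real) \<Rightarrow> real \<Rightarrow> real \<Rightarrow> nat \<Rightarrow> real \<Rightarrow> real" where
  "HH f a b n t = (\<Sum>j=1..n. Hj f a b n j t)"

definition FF :: "(real \<Rightarrow> real) \<Rightarrow> real \<Rightarrow> real \<Rightarrow> nat \<Rightarrow> real \<Rightarrow> real" where
  "FF f a b n t = (\<Sum>j=1..n. Fj f a b n j t)"

end

theory Submission
  imports Defs
begin


lemma conv_affine: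
  fixes f :: "real \<Rightarrow> real" and p q a b \<alpha> \<beta> :: real
  assumes f: "convex_on {a..b} f" and m: "\<And>u. u \<in> {p..q} \<Longrightarrow> \<alpha>*u+\<beta> \<in> {a..b}"
  shows "convex_on {p..q} (\<lambda>u. f (\<alpha>*u+\<beta>))"
proof (rule convex_onI)
  fix t x y :: real assume t: "t > 0" "t < 1" and xy: "x \<in> {p..q}" "y \<in> {p..q}"
  have e: "\<alpha>*((1-t)*x+t*y)+\<beta> = (1-t)*(\<alpha>*x+\<beta>) + t*(\<alpha>*y+\<beta>)" by algebra
  show "f (\<alpha>*((1-t) *\<^sub>R x + t *\<^sub>R y)+\<beta>) \<le> (1-t) * f (\<alpha>*x+\<beta>) + t * f (\<alpha>*y+\<beta>)"
    using convex_onD[OF f, of t "\<alpha>*x+\<beta>" "\<alpha>*y+\<beta>"] m[OF xy(1)] m[OF xy(2)] t e by simp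
qed simp

lemma sym_mono0:
  fixes f :: "real \<Rightarrow> real"
  assumes f: "convex_on {a..b} f" and y: "0 \<le> y1" "y1 \<le> y2" "a \<le> m - y2" "m + y2 \<le> b"
  shows "f (m+y1) + f (m-y1) \<le> f (m+y2) + f (m-y2)"
proof (cases "y2 = 0")
  case True then show ?thesis using y by simp
next
  case False
  hence y2: "y2 > 0" using y by simp
  define l where "l = (y2 - y1)/(2*y2)"
  have l: "0 \<le> l" "l \<le> 1" using y y2 by (auto simp: l_def field_simps)
  have A: "m+y1 = (1-l)*(m+y2) + l*(m-y2)" using y2 by (simp add: l_def field_simps)
  have B: "m-y1 = (1-l)*(m-y2) + l*(m+y2)" using y2 by (simp add: l_def field_simps)
  have mem: "m+y2 \<in> {a..b}" "m-y2 \<in> {a..b}" using y by auto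
  have "f (m+y1) \<le> (1-l)*f(m+y2) + l*f(m-y2)"
    using convex_onD[OF f, of l "m+y2" "m-y2"] l mem A by simp
  moreover have "f (m-y1) \<le> (1-l)*f(m-y2) + l*f(m+y2)"
    using convex_onD[OF f, of l "m-y2" "m+y2"] l mem B by simp
  ultimately show ?thesis by (simp add: algebra_simps)
qed

lemma sym_mono:
  fixes f :: "real \<Rightarrow> real"
  assumes f: "convex_on {a..b} f" and y: "\<bar>y1\<bar> \<le> \<bar>y2\<bar>" "a \<le> m - \<bar>y2\<bar>" "m + \<bar>y2\<bar> \<le> b"
  shows "f (m+y1) + f (m-y1) \<le> f (m+y2) + f (m-y2)"
proof -
  have "f (m+\<bar>y1\<bar>) + f (m-\<bar>y1\<bar>) \<le> f (m+\<bar>y2\<bar>) + f (m-\<bar>y2\<bar>)"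
    using sym_mono0[OF f, of "\<bar>y1\<bar>" "\<bar>y2\<bar>" m] y by simp
  moreover have "f (m+\<bar>y\<bar>) + f (m-\<bar>y\<bar>) = f (m+y) + f (m-y)" for y
    by (cases "y \<ge> 0") auto
  ultimately show ?thesis by simp
qed

lemma convex_integrable:
  fixes g :: "real \<Rightarrow> real" and p q :: real
  assumes g: "convex_on {p..q} g"
  shows "g integrable_on {p..q}"
proof (cases "p < q")
  case False
  then show ?thesis
    using integrable_on_null[of p q g] by simp
next
  case True
  define m where "m = (p+q)/2"
  define M where "M = 2*\<bar>g m\<bar> + \<bar>g p\<bar> + \<bar>g q\<bar>"
  have up: "g x \<le> \<bar>g p\<bar> + \<bar>g q\<bar>" if x: "x \<in> {p..q}" for x
  proof -
    define t where "t = (x-p)/(q-p)"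
    have t: "0 \<le> t" "t \<le> 1" using x True by (auto simp: t_def field_simps)
    have "t*(q-p) = x-p" using True by (simp add: t_def)
    hence xe: "x = (1-t)*p + t*q" by (simp add: algebra_simps)
    have "g x \<le> (1-t)*g p + t*g q" using convex_onD[OF g, of t p q] t True xe by simp
    also have "\<dots> \<le> (1-t)*\<bar>g p\<bar> + t*\<bar>g q\<bar>" using t
      by (intro add_mono mult_left_mono) auto
    also have "\<dots> \<le> \<bar>g p\<bar> + \<bar>g q\<bar>" using t
      by (smt (verit) abs_ge_zero mult_left_le_one_le)
    finally show ?thesis .
  qed
  have bnd: "norm (g x) \<le> M" if x: "x \<in> {p..q}" for x
  proof -
    have x': "p+q-x \<in> {p..q}" using x by auto
    have "g m \<le> (1-1/2)*g x + (1/2)*g(p+q-x)"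
    proof -
      have "x / 2 + (p + q - x) / 2 = m" by (simp add: m_def field_simps)
      then show ?thesis using convex_onD[OF g, of "1/2" x "p+q-x"] x x' by simp
    qed
    then show ?thesis using up[OF x] up[OF x'] by (simp add: M_def)
  qed
  have cont: "continuous_on {p<..<q} g"
  proof -
    have "convex_on {p<..<q} g" by (rule convex_on_subset[OF g]) auto
    then show ?thesis by (intro convex_on_continuous) auto
  qed
  have "g integrable_on {p<..<q}"
  proof (rule measurable_bounded_by_integrable_imp_integrable[where g="\<lambda>_. M"])
    show "g \<in> borel_measurable (lebesgue_on {p<..<q})"
      by (rule continuous_imp_measurable_on_sets_lebesgue[OF cont]) auto
    show "(\<lambda>_. M) integrable_on {p<..<q}"
      using integrable_on_open_interval_real integrable_const_ivl by blast
    show "norm (g x) \<le> M" if "x \<in> {p<..<q}" for x using bnd that by auto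
  qed auto
  then show ?thesis using integrable_on_open_interval_real by blast
qed

lemma integral_convex_family:
  fixes G :: "real \<Rightarrow> real \<Rightarrow> real"
  assumes int: "\<And>t. t \<in> {0..1} \<Longrightarrow> G t integrable_on S"
    and cv: "\<And>u. u \<in> S \<Longrightarrow> convex_on {0..1} (\<lambda>t. G t u)"
  shows "convex_on {0..1} (\<lambda>t. integral S (G t))"
proof (rule convex_onI)
  fix t x y :: real assume t: "t > 0" "t < 1" and xy: "x \<in> {0..1}" "y \<in> {0..1}"
  have z: "(1-t)*x + t*y \<in> {0..1}"
    using xy t convex_real_interval(5)[of 0 1] unfolding convex_alt
    by (metis less_eq_real_def mult.commute real_scaleR_def)
  have "integral S (G ((1-t)*x + t*y)) \<le> integral S (\<lambda>u. (1-t) * G x u + t * G y u)"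
  proof (rule integral_le)
    show "G ((1-t)*x + t*y) integrable_on S" using int z by blast
    show "(\<lambda>u. (1-t) * G x u + t * G y u) integrable_on S"
      using int xy by (intro integrable_add integrable_on_mult_right) auto
    show "G ((1-t)*x + t*y) u \<le> (1-t) * G x u + t * G y u" if "u \<in> S" for u
      using convex_onD[OF cv[OF that], of t x y] t xy by simp
  qed
  also have "\<dots> = (1-t) * integral S (G x) + t * integral S (G y)"
    using int xy by (simp add: integral_add integrable_on_mult_right)
  finally show "integral S (G ((1-t) *\<^sub>R x + t *\<^sub>R y)) \<le> (1-t) * integral S (G x) + t * integral S (G y)"
    by simp
qed simp

lemma integral_reflect_ivl:
  fixes g :: "real \<Rightarrow> real"
  shows "integral {p..q} (\<lambda>u. g (p+q-u)) = integral {p..q} g"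
proof -
  have "integral {-q - (-(p+q)) .. -p - (-(p+q))} (\<lambda>x. (\<lambda>y. g (-y)) (x + (-(p+q)))) = integral {-q..-p} (\<lambda>y. g (-y))"
    by (rule integral_shift_real_ivl)
  also have "\<dots> = integral {p..q} g" by simp
  finally show ?thesis by (simp add: algebra_simps)
qed

lemma mono_reflect_family:
  fixes G :: "real \<Rightarrow> real \<Rightarrow> real"
  assumes int: "\<And>t. t \<in> {0..1} \<Longrightarrow> G t integrable_on {p..q}"
    and int2: "\<And>t. t \<in> {0..1} \<Longrightarrow> (\<lambda>u. G t (p+q-u)) integrable_on {p..q}"
    and mn: "\<And>u s t. u \<in> {p..q} \<Longrightarrow> s \<in> {0..1} \<Longrightarrow> t \<in> {0..1} \<Longrightarrow> s \<le> t \<Longrightarrow>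
               G s u + G s (p+q-u) \<le> G t u + G t (p+q-u)"
  shows "mono_on {0..1} (\<lambda>t. integral {p..q} (G t))"
proof (rule mono_onI)
  fix s t :: real assume st: "s \<in> {0..1}" "t \<in> {0..1}" "s \<le> t"
  have e: "2 * integral {p..q} (G r) = integral {p..q} (\<lambda>u. G r u + G r (p+q-u))" if "r \<in> {0..1}" for r
    using integral_add[OF int[OF that] int2[OF that]] integral_reflect_ivl[of p q "G r"] by simp
  have "integral {p..q} (\<lambda>u. G s u + G s (p+q-u)) \<le> integral {p..q} (\<lambda>u. G t u + G t (p+q-u))"
    using st by (intro integral_le integrable_add int int2 mn) auto
  then show "integral {p..q} (G s) \<le> integral {p..q} (G t)" using e[OF st(1)] e[OF st(2)] by simp
qed

lemma cc_mem:
  fixes t u v p q :: real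
  assumes "0 \<le> t" "t \<le> 1" "p \<le> u" "u \<le> q" "p \<le> v" "v \<le> q"
  shows "p \<le> t*u + (1-t)* v" "t*u + (1-t)* v \<le> q"
proof -
  have "t*p \<le> t*u" "(1-t)*p \<le> (1-t)* v" "t*u \<le> t*q" "(1-t)* v \<le> (1-t)*q"
    using assms by (auto intro: mult_left_mono)
  then show "p \<le> t*u + (1-t)* v" "t*u + (1-t)* v \<le> q" by (auto simp: algebra_simps)
qed

lemma reflect_integrable:
  fixes g :: "real \<Rightarrow> real"
  assumes "convex_on {p..q} g"
  shows "(\<lambda>u. g (p+q-u)) integrable_on {p..q}"
proof -
  have "convex_on {p..q} (\<lambda>u. g ((-1)*u + (p+q)))"
    by (rule conv_affine[OF assms]) auto
  then show ?thesis using convex_integrable by simp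
qed

lemma H_gen:
  fixes f :: "real \<Rightarrow> real" and a b p q :: real
  assumes f: "convex_on {a..b} f" and pq: "a \<le> p" "p < q" "q \<le> b"
  defines "G \<equiv> \<lambda>t u. f (t*u + (1-t)*((p+q)/2))"
  shows "convex_on {0..1} (\<lambda>t. integral {p..q} (G t))"
    "mono_on {0..1} (\<lambda>t. integral {p..q} (G t))"
    "integral {p..q} (G 0) = (q-p) * f((p+q)/2)"
    "integral {p..q} (G 1) = integral {p..q} f"
proof -
  define c where "c = (p+q)/2"
  have c: "p \<le> c" "c \<le> q" using pq by (auto simp: c_def)
  have f': "convex_on {p..q} f" by (rule convex_on_subset[OF f]) (use pq in auto)
  have cvu: "convex_on {p..q} (G t)" if t: "t \<in> {0..1}" for t
    unfolding G_def c_def[symmetric]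
  proof (rule conv_affine[OF f'])
    fix u assume "u \<in> {p..q}"
    then show "t * u + (1 - t) * c \<in> {p..q}" using cc_mem[where t=t and u=u and v=c and p=p and q=q] t c by auto
  qed
  have int: "G t integrable_on {p..q}" if "t \<in> {0..1}" for t
    using convex_integrable[OF cvu[OF that]] .
  have int2: "(\<lambda>u. G t (p+q-u)) integrable_on {p..q}" if "t \<in> {0..1}" for t
    using reflect_integrable[OF cvu[OF that]] .
  show "convex_on {0..1} (\<lambda>t. integral {p..q} (G t))"
  proof (rule integral_convex_family[OF int])
    fix u assume u: "u \<in> {p..q}"
    have e: "(\<lambda>t. G t u) = (\<lambda>t. f ((u-c)*t + c))"
      unfolding G_def c_def[symmetric] by (rule ext, rule arg_cong[where f=f]) algebra
    show "convex_on {0..1} (\<lambda>t. G t u)" unfolding e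
    proof (rule conv_affine[OF f'])
      fix t :: real assume t: "t \<in> {0..1}"
      have "(u-c)*t + c = t*u + (1-t)*c" by algebra
      then show "(u-c)*t + c \<in> {p..q}" using cc_mem[where t=t and u=u and v=c and p=p and q=q] t u c by auto
    qed
  qed auto
  show "mono_on {0..1} (\<lambda>t. integral {p..q} (G t))"
  proof (rule mono_reflect_family[OF int int2])
    fix u s t :: real assume u: "u \<in> {p..q}" and st: "s \<in> {0..1}" "t \<in> {0..1}" "s \<le> t"
    have e1: "G r u = f (c + r*(u-c))" for r unfolding G_def c_def[symmetric]
      by (rule arg_cong[where f=f]) algebra
    have e2: "G r (p+q-u) = f (c - r*(u-c))" for r unfolding G_def c_def
      by (rule arg_cong[where f=f]) (simp add: field_simps)
    have ab: "\<bar>s*(u-c)\<bar> \<le> \<bar>t*(u-c)\<bar>" using st by (simp add: abs_mult mult_right_mono)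
    have "\<bar>t*(u-c)\<bar> \<le> \<bar>u-c\<bar>" using st by (simp add: abs_mult mult_left_le_one_le)
    moreover have "\<bar>u - c\<bar> \<le> (q-p)/2" using u by (auto simp: c_def abs_if field_simps)
    ultimately have "\<bar>t*(u-c)\<bar> \<le> (q-p)/2" by linarith
    moreover have "\<And>z::real. z \<le> (q-p)/2 \<Longrightarrow> a \<le> c - z \<and> c + z \<le> b" using pq c_def by auto
    ultimately have bd: "a \<le> c - \<bar>t*(u-c)\<bar>" "c + \<bar>t*(u-c)\<bar> \<le> b" by blast+
    show "G s u + G s (p+q-u) \<le> G t u + G t (p+q-u)"
      unfolding e1 e2 using sym_mono[OF f ab bd] by simp
  qed auto
  show "integral {p..q} (G 0) = (q-p) * f((p+q)/2)" using pq by (simp add: G_def)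
  show "integral {p..q} (G 1) = integral {p..q} f" by (simp add: G_def)
qed

lemma half_aff:
  fixes f :: "real \<Rightarrow> real"
  assumes "f integrable_on {lo..hi}"
  shows "integral {2*lo - c .. 2*hi - c} (\<lambda>u. f (u/2 + c/2)) = 2 * integral {lo..hi} f"
proof -
  have "(f has_integral integral {lo..hi} f) (cbox lo hi)"
    using assms by (simp add: integrable_integral)
  from has_integral_affinity'[OF this, of "1/2" "c/2"]
  have "((\<lambda>x. f ((x + c)/2)) has_integral (2 * integral {lo..hi} f)) {(lo * 4 - c * 2) / 2..(hi * 4 - c * 2) / 2}"
    by (simp add: field_simps)
  moreover have "(lo*4 - c*2)/2 = 2*lo - c" "(hi*4 - c*2)/2 = 2*hi - c" by simp_all
  moreover have "(\<lambda>u. f (u/2+c/2)) = (\<lambda>x. f ((x+c)/2))" by (simp add: add_divide_distrib)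
  ultimately show ?thesis using integral_unique by metis
qed

lemma F_pair:
  fixes f :: "real \<Rightarrow> real"
  assumes f: "convex_on {a..b} f" and pq: "a \<le> p" "p < q" "q \<le> b"
    and v: "v \<in> {p..q}" and st: "s \<in> {0..1}" "t \<in> {0..1}" "s \<le> t"
  shows "f ((1+s)/2*p + (1-s)/2* v) + f ((1+s)/2*q + (1-s)/2*(p+q-v))
       \<le> f ((1+t)/2*p + (1-t)/2* v) + f ((1+t)/2*q + (1-t)/2*(p+q-v))"
proof -
  define m where "m = (p+q)/2"
  define y where "y = (\<lambda>r. (q-v)/2 + r*(v-p)/2)"
  have A: "m - y r = (1+r)/2*p + (1-r)/2* v" for r by (simp add: m_def y_def field_simps)
  have B: "m + y r = (1+r)/2*q + (1-r)/2*(p+q-v)" for r by (simp add: m_def y_def field_simps)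
  have y0: "0 \<le> y s" using v st by (simp add: y_def)
  have "s*(v-p) \<le> t*(v-p)" using v st by (intro mult_right_mono) auto
  hence ys: "y s \<le> y t" by (simp add: y_def)
  have "t*(v-p) \<le> v - p" using v st by (simp add: mult_left_le_one_le)
  hence yt: "y t \<le> (q-p)/2" by (simp add: y_def field_simps)
  have ab: "\<bar>y s\<bar> \<le> \<bar>y t\<bar>" using y0 ys by simp
  have bd: "a \<le> m - \<bar>y t\<bar>" "m + \<bar>y t\<bar> \<le> b" using y0 ys yt pq by (auto simp: m_def field_simps)
  have "f (m + y s) + f (m - y s) \<le> f (m + y t) + f (m - y t)" by (rule sym_mono[OF f ab bd])
  then show ?thesis unfolding A B by simp
qed

lemma F_gen:
  fixes f :: "real \<Rightarrow> real" and a b p q :: real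
  assumes f: "convex_on {a..b} f" and pq: "a \<le> p" "p < q" "q \<le> b"
  defines "G \<equiv> \<lambda>t u. f ((1+t)/2*p + (1-t)/2*u) + f ((1+t)/2*q + (1-t)/2*u)"
  shows "convex_on {0..1} (\<lambda>t. integral {p..q} (G t))"
    "mono_on {0..1} (\<lambda>t. integral {p..q} (G t))"
    "integral {p..q} (G 1) = (q-p) * (f p + f q)"
    "integral {p..q} (G 0) = 2 * integral {p..q} f"
proof -
  have f': "convex_on {p..q} f" by (rule convex_on_subset[OF f]) (use pq in auto)
  have mem: "(1+t)/2*w + (1-t)/2*u \<in> {p..q}" if "t \<in> {0..1}" "u \<in> {p..q}" "w \<in> {p..q}" for t u w
  proof -
    have e: "(1+t)/2*w + (1-t)/2*u = (1+t)/2*w + (1-(1+t)/2)*u" by (simp add: field_simps)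
    have "0 \<le> (1+t)/2" "(1+t)/2 \<le> 1" using that by auto
    note cc = cc_mem[where t="(1+t)/2" and u=w and v=u and p=p and q=q, OF this]
    show ?thesis unfolding atLeastAtMost_iff e using cc that by auto
  qed
  have cvu: "convex_on {p..q} (G t)" if t: "t \<in> {0..1}" for t
  proof -
    have "convex_on {p..q} (\<lambda>u. f ((1-t)/2*u + (1+t)/2*w))" if "w \<in> {p..q}" for w
    proof (rule conv_affine[OF f'])
      fix u assume "u \<in> {p..q}"
      then show "(1-t)/2*u + (1+t)/2*w \<in> {p..q}" using mem[OF t _ that] by (simp add: add.commute)
    qed
    from convex_on_add[OF this[of p] this[of q]] show ?thesis using pq
      unfolding G_def by (simp add: add.commute)
  qed
  have int: "G t integrable_on {p..q}" if "t \<in> {0..1}" for t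
    using convex_integrable[OF cvu[OF that]] .
  have int2: "(\<lambda>u. G t (p+q-u)) integrable_on {p..q}" if "t \<in> {0..1}" for t
    using reflect_integrable[OF cvu[OF that]] .
  show "convex_on {0..1} (\<lambda>t. integral {p..q} (G t))"
  proof (rule integral_convex_family[OF int])
    fix u assume u: "u \<in> {p..q}"
    have cvt: "convex_on {0..1} (\<lambda>t. f ((1+t)/2*w + (1-t)/2*u))" if w: "w \<in> {p..q}" for w
    proof -
      have e: "(\<lambda>t. f ((1+t)/2*w + (1-t)/2*u)) = (\<lambda>t. f ((w-u)/2*t + (w+u)/2))"
        by (rule ext, rule arg_cong[where f=f]) (simp add: field_simps)
      show ?thesis unfolding e
      proof (rule conv_affine[OF f'])
        fix t :: real assume t: "t \<in> {0..1}"
        have "(w-u)/2*t + (w+u)/2 = (1+t)/2*w + (1-t)/2*u" by (simp add: field_simps)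
        then show "(w-u)/2*t + (w+u)/2 \<in> {p..q}" using mem[OF t u w] by simp
      qed
    qed
    show "convex_on {0..1} (\<lambda>t. G t u)" unfolding G_def
      using convex_on_add[OF cvt[of p] cvt[of q]] pq by simp
  qed auto
  show "mono_on {0..1} (\<lambda>t. integral {p..q} (G t))"
  proof (rule mono_reflect_family[OF int int2])
    fix u s t :: real assume u: "u \<in> {p..q}" and st: "s \<in> {0..1}" "t \<in> {0..1}" "s \<le> t"
    have u': "p+q-u \<in> {p..q}" using u by auto
    have 1: "f ((1+s)/2*p + (1-s)/2*u) + f ((1+s)/2*q + (1-s)/2*(p+q-u))
       \<le> f ((1+t)/2*p + (1-t)/2*u) + f ((1+t)/2*q + (1-t)/2*(p+q-u))"
      by (rule F_pair[OF f pq u st])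
    have 2: "f ((1+s)/2*p + (1-s)/2*(p+q-u)) + f ((1+s)/2*q + (1-s)/2*(p+q-(p+q-u)))
       \<le> f ((1+t)/2*p + (1-t)/2*(p+q-u)) + f ((1+t)/2*q + (1-t)/2*(p+q-(p+q-u)))"
      by (rule F_pair[OF f pq u' st])
    show "G s u + G s (p+q-u) \<le> G t u + G t (p+q-u)"
      using add_mono[OF 1 2] unfolding G_def by (simp add: algebra_simps)
  qed auto
  show "integral {p..q} (G 1) = (q-p) * (f p + f q)" using pq by (simp add: G_def)
  have i1: "integral {p..q} (\<lambda>u. f (u/2 + p/2)) = 2 * integral {p..(p+q)/2} f"
  proof -
    have X: "integral {2*p - p .. 2*((p+q)/2) - p} (\<lambda>u. f (u/2 + p/2)) = 2 * integral {p..(p+q)/2} f"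
      by (rule half_aff, rule integrable_subinterval_real[OF convex_integrable[OF f']]) (use pq in auto)
    moreover have "2*p - p = p" "2*((p+q)/2) - p = q" by (simp_all add: field_simps)
    ultimately show ?thesis by (simp only:)
  qed
  have i2: "integral {p..q} (\<lambda>u. f (u/2 + q/2)) = 2 * integral {(p+q)/2..q} f"
  proof -
    have X: "integral {2*((p+q)/2) - q .. 2*q - q} (\<lambda>u. f (u/2 + q/2)) = 2 * integral {(p+q)/2..q} f"
      by (rule half_aff, rule integrable_subinterval_real[OF convex_integrable[OF f']]) (use pq in auto)
    moreover have "2*q - q = q" "2*((p+q)/2) - q = p" by (simp_all add: field_simps)
    ultimately show ?thesis by (simp only:)
  qed
  have g0: "G 0 = (\<lambda>u. f (u/2 + p/2) + f (u/2 + q/2))"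
    unfolding G_def by (rule ext) (simp add: add.commute)
  have ih: "(\<lambda>u. f (u/2 + c/2)) integrable_on {p..q}" if c: "c \<in> {p..q}" for c
  proof -
    have "convex_on {p..q} (\<lambda>u. f ((1/2)*u + c/2))"
      by (rule conv_affine[OF f']) (use c in auto)
    then show ?thesis using convex_integrable by simp
  qed
  have "integral {p..q} (G 0) = integral {p..q} (\<lambda>u. f (u/2 + p/2)) + integral {p..q} (\<lambda>u. f (u/2 + q/2))"
    unfolding g0 by (rule integral_add; rule ih) (use pq in auto)
  also have "\<dots> = 2 * integral {p..q} f"
    unfolding i1 i2 using Henstock_Kurzweil_Integration.integral_combine[where a=p and c="(p+q)/2" and b=q and f=f] convex_integrable[OF f'] pq
    by simp
  finally show "integral {p..q} (G 0) = 2 * integral {p..q} f" .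
qed

lemma convex_on_sum_fun:
  fixes g :: "'i \<Rightarrow> real \<Rightarrow> real"
  assumes "finite I" "\<And>i. i \<in> I \<Longrightarrow> convex_on S (g i)" "convex S"
  shows "convex_on S (\<lambda>t. \<Sum>i\<in>I. g i t)"
  using assms by (induction I rule: finite_induct) (auto intro!: convex_on_add simp: convex_on_const)

lemma mono_on_sum_fun:
  fixes g :: "'i \<Rightarrow> real \<Rightarrow> real"
  assumes "\<And>i. i \<in> I \<Longrightarrow> mono_on S (g i)"
  shows "mono_on S (\<lambda>t. \<Sum>i\<in>I. g i t)"
  using assms by (intro mono_onI sum_mono) (auto simp: mono_on_def)

lemma mono_on_cmul:
  fixes g :: "real \<Rightarrow> real"
  assumes "mono_on S g" "c \<ge> 0"
  shows "mono_on S (\<lambda>t. c * g t)"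
  using assms unfolding mono_on_def by (auto intro!: mult_left_mono)

lemma sup_mono01:
  fixes g :: "real \<Rightarrow> real"
  assumes "mono_on {0..1} g"
  shows "(SUP t\<in>{0..1}. g t) = g 1" "(INF t\<in>{0..1}. g t) = g 0"
  using assms by (auto intro!: cSup_eq_maximum cInf_eq_minimum simp: mono_on_def)

lemma tele:
  fixes g :: "nat \<Rightarrow> real"
  shows "(\<Sum>j=1..Suc m. (g (j-1) + g j)/2) = (1/2)*(g 0 + 2*(\<Sum>k=1..m. g k) + g (Suc m))"
  by (induction m) (simp_all add: field_simps)

lemma grid_integral:
  fixes f :: "real \<Rightarrow> real"
  assumes f: "f integrable_on {a..b}" and ab: "a < b" and n: "n \<ge> 1" and m: "m \<le> n"
  shows "(\<Sum>j=1..m. integral {grid_pt a b n (j-1)..grid_pt a b n j} f) = integral {a..grid_pt a b n m} f"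
  using m
proof (induction m)
  case 0
  then show ?case by (simp add: grid_pt_def)
next
  case (Suc m)
  define h where "h = (b-a)/real n"
  have h: "h > 0" using ab n by (simp add: h_def)
  have g: "grid_pt a b n k = a + real k * h" for k by (simp add: grid_pt_def h_def)
  have "real (Suc m) * h \<le> real n * h" using Suc.prems h by (intro mult_right_mono) auto
  moreover have "real n * h = b - a" using n by (simp add: h_def)
  ultimately have le: "grid_pt a b n (Suc m) \<le> b" by (simp add: g)
  have fi: "f integrable_on {a..grid_pt a b n (Suc m)}"
    by (rule integrable_subinterval_real[OF f]) (use le in auto)
  have "(\<Sum>j=1..Suc m. integral {grid_pt a b n (j-1)..grid_pt a b n j} f)
      = integral {a..grid_pt a b n m} f + integral {grid_pt a b n m..grid_pt a b n (Suc m)} f"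
    using Suc by simp
  also have "\<dots> = integral {a..grid_pt a b n (Suc m)} f"
    by (rule Henstock_Kurzweil_Integration.integral_combine[OF _ _ fi]) (use h in \<open>auto simp: g\<close>)
  finally show ?case .
qed

theorem proposition2p4:
  fixes f :: "real \<Rightarrow> real" and a b :: real and n :: nat
  assumes "a < b" and "n \<ge> 1" and "convex_on {a..b} f"
  defines "h \<equiv> (b - a) / real n"
      and "x \<equiv> grid_pt a b n"
      and "H \<equiv> HH f a b n"
      and "F \<equiv> FF f a b n"
  shows "(convex_on {0..1} H \<and> convex_on {0..1} F) \<and>
         (mono_on {0..1} H \<and> mono_on {0..1} F) \<and>
         ((SUP t\<in>{0..1}. H t) = (1 / h) * integral {a..b} f \<and> (1 / h) * integral {a..b} f = H 1) \<and>
         ((INF t\<in>{0..1}. H t) = (\<Sum>k=1..n. f ((x (k - 1) + x k) / 2)) \<and>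
         (\<Sum>k=1..n. f ((x (k - 1) + x k) / 2)) = H 0) \<and>
         ((SUP t\<in>{0..1}. F t) = (1 / 2) * (f a + 2 * (\<Sum>k=1..n-1. f (x k)) + f b) \<and>
         (1 / 2) * (f a + 2 * (\<Sum>k=1..n-1. f (x k)) + f b) = F 1) \<and>
         ((INF t\<in>{0..1}. F t) = (1 / h) * integral {a..b} f \<and> (1 / h) * integral {a..b} f = F 0)"
proof -
  note fc = assms(3)
  have hpos: "h > 0" using assms(1,2) by (simp add: h_def)
  have xk: "x k = a + real k * h" for k by (simp add: x_def grid_pt_def h_def)
  have nh: "real n * h = b - a" using assms(2) by (simp add: h_def)
  have props: "a \<le> x (j-1) \<and> x (j-1) < x j \<and> x j \<le> b \<and> x j - x (j-1) = h" if j: "j \<in> {1..n}" for j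
  proof -
    have r: "real (j-1) = real j - 1" using j by (simp add: of_nat_diff)
    have "1 \<le> real j" using j by simp
    hence "0 \<le> (real j - 1) * h" using hpos by simp
    moreover have "real j * h \<le> real n * h" using j hpos by (intro mult_right_mono) auto
    hence "x j \<le> b" using nh by (simp add: xk)
    ultimately show ?thesis using hpos by (simp add: xk r algebra_simps)
  qed
  have Hj_eq: "Hj f a b n j = (\<lambda>t. (1/h) * integral {x (j-1)..x j} (\<lambda>u. f (t*u + (1-t)*((x (j-1) + x j)/2))))" for j
    by (simp add: Hj_def Let_def x_def h_def fun_eq_iff)
  have Fj_eq: "Fj f a b n j = (\<lambda>t. (1/(2*h)) * integral {x (j-1)..x j}
        (\<lambda>u. f ((1 + t) / 2 * x (j-1) + (1 - t) / 2 * u) + f ((1 + t) / 2 * x j + (1 - t) / 2 * u)))" for j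
    by (simp add: Fj_def Let_def x_def h_def fun_eq_iff)
  have Hs: "H = (\<lambda>t. \<Sum>j=1..n. Hj f a b n j t)" by (simp add: H_def HH_def fun_eq_iff)
  have Fs: "F = (\<lambda>t. \<Sum>j=1..n. Fj f a b n j t)" by (simp add: F_def FF_def fun_eq_iff)
  have ih: "1/h \<ge> 0" "1/(2*h) \<ge> 0" using hpos by auto
  have cH: "convex_on {0..1} (Hj f a b n j)" if j: "j \<in> {1..n}" for j
    unfolding Hj_eq using props[OF j] by (intro convex_on_cmul[OF ih(1)] H_gen(1)[OF fc]) auto
  have mH: "mono_on {0..1} (Hj f a b n j)" if j: "j \<in> {1..n}" for j
  proof -
    have "mono_on {0..1} (\<lambda>t. integral {x (j-1)..x j} (\<lambda>u. f (t*u + (1-t)*((x (j-1) + x j)/2))))"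
      using props[OF j] by (intro H_gen(2)[OF fc]) auto
    then show ?thesis unfolding Hj_eq using ih(1) by (rule mono_on_cmul)
  qed
  have cF: "convex_on {0..1} (Fj f a b n j)" if j: "j \<in> {1..n}" for j
    unfolding Fj_eq using props[OF j] by (intro convex_on_cmul[OF ih(2)] F_gen(1)[OF fc]) auto
  have mF: "mono_on {0..1} (Fj f a b n j)" if j: "j \<in> {1..n}" for j
  proof -
    have "mono_on {0..1} (\<lambda>t. integral {x (j-1)..x j}
        (\<lambda>u. f ((1 + t) / 2 * x (j-1) + (1 - t) / 2 * u) + f ((1 + t) / 2 * x j + (1 - t) / 2 * u)))"
      using props[OF j] by (intro F_gen(2)[OF fc]) auto
    then show ?thesis unfolding Fj_eq using ih(2) by (rule mono_on_cmul)
  qed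
  have convH: "convex_on {0..1} H" unfolding Hs by (rule convex_on_sum_fun) (use cH in auto)
  have convF: "convex_on {0..1} F" unfolding Fs by (rule convex_on_sum_fun) (use cF in auto)
  have monoH: "mono_on {0..1} H" unfolding Hs by (rule mono_on_sum_fun) (use mH in auto)
  have monoF: "mono_on {0..1} F" unfolding Fs by (rule mono_on_sum_fun) (use mF in auto)
  have fint: "f integrable_on {a..b}" by (rule convex_integrable[OF fc])
  have xn: "x n = b" using nh by (simp add: xk)
  have x0: "x 0 = a" by (simp add: xk)
  have sumI: "(\<Sum>j=1..n. integral {x (j-1)..x j} f) = integral {a..b} f"
    using grid_integral[OF fint assms(1,2) order.refl] xn by (simp add: x_def)
  have H1: "H 1 = (1/h) * integral {a..b} f"
  proof -
    have "H 1 = (\<Sum>j=1..n. (1/h) * integral {x (j-1)..x j} f)"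
      unfolding Hs
    proof (rule sum.cong[OF refl])
      fix j assume j: "j \<in> {1..n}"
      show "Hj f a b n j 1 = (1/h) * integral {x (j-1)..x j} f"
        unfolding Hj_eq using H_gen(4)[OF fc, of "x (j-1)" "x j"] props[OF j] by simp
    qed
    then show ?thesis by (simp only: sum_distrib_left[symmetric] sumI)
  qed
  have H0: "H 0 = (\<Sum>k=1..n. f ((x (k - 1) + x k) / 2))"
    unfolding Hs
  proof (rule sum.cong[OF refl])
    fix j assume j: "j \<in> {1..n}"
    show "Hj f a b n j 0 = f ((x (j-1) + x j)/2)"
      unfolding Hj_eq using H_gen(3)[OF fc, of "x (j-1)" "x j"] props[OF j] hpos by simp
  qed
  have F0: "F 0 = (1/h) * integral {a..b} f"
  proof -
    have "F 0 = (\<Sum>j=1..n. (1/h) * integral {x (j-1)..x j} f)"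
      unfolding Fs
    proof (rule sum.cong[OF refl])
      fix j assume j: "j \<in> {1..n}"
      show "Fj f a b n j 0 = (1/h) * integral {x (j-1)..x j} f"
        unfolding Fj_eq using F_gen(4)[OF fc, of "x (j-1)" "x j"] props[OF j] hpos by simp
    qed
    then show ?thesis by (simp only: sum_distrib_left[symmetric] sumI)
  qed
  have F1: "F 1 = (1 / 2) * (f a + 2 * (\<Sum>k=1..n-1. f (x k)) + f b)"
  proof -
    have "F 1 = (\<Sum>j=1..n. (f (x (j-1)) + f (x j))/2)"
      unfolding Fs
    proof (rule sum.cong[OF refl])
      fix j assume j: "j \<in> {1..n}"
      show "Fj f a b n j 1 = (f (x (j-1)) + f (x j))/2"
        unfolding Fj_eq using F_gen(3)[OF fc, of "x (j-1)" "x j"] props[OF j] hpos by simp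
    qed
    also have "\<dots> = (1 / 2) * (f a + 2 * (\<Sum>k=1..n-1. f (x k)) + f b)"
    proof -
      obtain m where m: "n = Suc m" using assms(2) by (cases n) auto
      show ?thesis using tele[of "\<lambda>k. f (x k)" m] x0 xn unfolding m by simp
    qed
    finally show ?thesis .
  qed
  show ?thesis
    using convH convF monoH monoF sup_mono01[OF monoH] sup_mono01[OF monoF] H1 H0 F1 F0
    by simp
qed

end
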